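(* Let $\{X_t\}$ satisfy Assumption CEV with tail index $\alpha>0$ and conditional scaling exponents $\kappa_1,\dots,\kappa_h$, and suppose that the restriction of $\nu_h$ to $[1,\infty)\times\mathbb R^h$ is a probability measure. Let $(Y_0,\dots,Y_h)$ be a random vector with this distribution. Then $\mathbb P(Y_0>y)=y^{-\alpha}$ for $y\ge1$, and the random vector $(J_1,\dots,J_h):=(Y_0^{-\kappa_1}Y_1,\dots,Y_0^{-\kappa_h}Y_h)$ is independent of $Y_0$; consequently $(Y_0,Y_1,\dots,Y_h)\overset{d}{=}(Y_0,Y_0^{\kappa_1}J_1,\dots,Y_0^{\kappa_h}J_h)$ with $Y_0$ standard Pareto with index $\alpha$ independent of $(J_1,\dots,J_h)$.
   Context: Assumption CEV: $\{X_t\}_{t\in\mathbb Z}$ is a real-valued time series (not necessarily stationary). There exist positive scaling functions $b_j$, $j\ge1$, and, for each $h\ge1$, a nonzero Radon measure $\nu_h$ on $(0,\infty]\times[-\infty,\infty]^h$ such that $$\frac{1}{\mathbb P(X_0>x)}\,\mathbb P\Big(\Big(\frac{X_0}{x},\frac{X_1}{b_1(x)},\dots,\frac{X_h}{b_h(x)}\Big)\in\cdot\Big)\to\nu_h$$ vaguely on $(0,\infty]\times[-\infty,\infty]^h$ as $x\to\infty$ (relatively compact sets of this space are those whose points have first coordinate bounded below by some $\epsilon>0$), and for every $y_0>0$: (a) the measure $\nu_h([y_0,\infty]\times\cdot)$ on $\mathbb R^h$ is not concentrated on a line through infinity; (b) the measure $\nu_h([y_0,\infty]\times\cdot)$ on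 $\mathbb R^h$ is not concentrated on a hyperplane; (c) the measure $\nu_h(\cdot\times\mathbb R^h)$ on $(0,\infty]$ is not concentrated at $\{\infty\}$. Under this assumption $\mathbb P(X_0>x)$ is regularly varying with index $-\alpha$ for some $\alpha>0$, each $b_j$ is regularly varying with some index $\kappa_j\in\mathbb R$ (the lag-$j$ conditional scaling exponent), and $\nu_h((ty_0,\infty]\times\prod_i[-\infty,t^{\kappa_i}y_i])=t^{-\alpha}\nu_h((y_0,\infty]\times\prod_i[-\infty,y_i])$ for $t>0$. *)

theory Defs
  imports "HOL-Probability.Probability"
begin

text \<open>The space (0,\<infinity>] x [-\<infinity>,\<infinity>]^h, embedded in the Borel space of
  ereal x ({1..h} -> ereal); the measure nu_h lives on it (mass on first coordinate
  \<le> 0 is required to vanish in the statement).\<close>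
definition cev_space :: "nat \<Rightarrow> (ereal \<times> (nat \<Rightarrow> ereal)) measure" where
  "cev_space h = (borel :: ereal measure) \<Otimes>\<^sub>M PiM {1..h} (\<lambda>_. (borel :: ereal measure))"

definition cev_rect :: "nat \<Rightarrow> real \<Rightarrow> (nat \<Rightarrow> real) \<Rightarrow> (ereal \<times> (nat \<Rightarrow> ereal)) set" where
  "cev_rect h y0 y = {p \<in> space (cev_space h). ereal y0 < fst p \<and> (\<forall>i\<in>{1..h}. snd p i \<le> ereal (y i))}"

definition cev_unit_part :: "nat \<Rightarrow> (ereal \<times> (nat \<Rightarrow> ereal)) set" where
  "cev_unit_part h = {p \<in> space (cev_space h). 1 \<le> fst p \<and> fst p < \<infinity> \<and>
                        (\<forall>i\<in>{1..h}. \<bar>snd p i\<bar> < \<infinity>)}"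

definition cev_real :: "nat \<Rightarrow> ereal \<times> (nat \<Rightarrow> ereal) \<Rightarrow> real \<times> (nat \<Rightarrow> real)" where
  "cev_real h p = (real_of_ereal (fst p), \<lambda>i\<in>{1..h}. real_of_ereal (snd p i))"

definition real_vec_space :: "nat \<Rightarrow> (real \<times> (nat \<Rightarrow> real)) measure" where
  "real_vec_space h = (borel :: real measure) \<Otimes>\<^sub>M PiM {1..h} (\<lambda>_. (borel :: real measure))"

end

theory Submission
  imports Defs
begin


definition Om :: "nat \<Rightarrow> real \<Rightarrow> (ereal \<times> (nat \<Rightarrow> ereal)) set" where
  "Om h c = {p \<in> space (cev_space h). ereal c < fst p \<and> (\<forall>i\<in>{1..h}. snd p i < \<infinity>)}"

lemma space_cev: "space (cev_space h) = UNIV \<times> (Pi\<^sub>E {1..h} (\<lambda>_. UNIV))"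
  by (simp add: cev_space_def space_pair_measure space_PiM)

lemma Om_sets: "Om h c \<in> sets (cev_space h)"
  unfolding Om_def cev_space_def by measurable

lemma rect_sets: "cev_rect h a b \<in> sets (cev_space h)"
  unfolding cev_rect_def cev_space_def by measurable

lemma unit_sets: "cev_unit_part h \<in> sets (cev_space h)"
  unfolding cev_unit_part_def cev_space_def by measurable

lemma cev_real_meas: "cev_real h \<in> measurable (cev_space h) (real_vec_space h)"
  unfolding cev_real_def cev_space_def real_vec_space_def by measurable



lemma Om_bound:
  fixes h :: nat and p :: "ereal \<times> (nat \<Rightarrow> ereal)"
  assumes "\<forall>i\<in>{1..h}. snd p i < \<infinity>"
  shows "\<exists>n::nat. \<forall>i\<in>{1..h}. snd p i \<le> ereal (real n)"
proof -
  define n where "n = nat \<lceil>\<Sum>i\<in>{1..h}. \<bar>real_of_ereal (snd p i)\<bar>\<rceil>"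
  have "\<forall>i\<in>{1..h}. snd p i \<le> ereal (real n)"
  proof
    fix i assume i: "i \<in> {1..h}"
    have "\<bar>real_of_ereal (snd p i)\<bar> \<le> (\<Sum>i\<in>{1..h}. \<bar>real_of_ereal (snd p i)\<bar>)"
      by (rule member_le_sum[where f="\<lambda>j. \<bar>real_of_ereal (snd p j)\<bar>", OF i], rule abs_ge_zero, rule finite_atLeastAtMost)
    also have "\<dots> \<le> real n" unfolding n_def by linarith
    finally have le: "real_of_ereal (snd p i) \<le> real n" by linarith
    show "snd p i \<le> ereal (real n)"
      using assms i le by (cases "snd p i") auto
  qed
  then show ?thesis by blast
qed

lemma rect_sub_Om: "c \<le> a \<Longrightarrow> cev_rect h a b \<subseteq> Om h c"
  unfolding cev_rect_def Om_def
  by (auto intro: le_less_trans[of _ "ereal a"] le_less_trans[of _ _ "\<infinity>"])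

lemma gen_sets:
  "sets (restrict_space (cev_space h) (Om h c)) = sigma_sets (Om h c) {cev_rect h a b | a b. c \<le> a}"
  (is "sets ?R = sigma_sets ?\<Omega> ?G")
proof -
  have GO: "?G \<subseteq> Pow ?\<Omega>" using rect_sub_Om by blast
  have spR: "space ?R = ?\<Omega>" using Om_sets by simp
  define MS where "MS = sigma ?\<Omega> ?G"
  have sMS: "sets MS = sigma_sets ?\<Omega> ?G" and spMS: "space MS = ?\<Omega>"
    unfolding MS_def using GO by auto
  have Gin: "cev_rect h a b \<in> sets MS" if "c \<le> a" for a b
    unfolding sMS using that by (auto intro: sigma_sets.Basic)
  have fstm: "fst \<in> borel_measurable MS"
  proof (rule borel_measurableI_greater)
    fix y :: ereal
    show "{x \<in> space MS. y < fst x} \<in> sets MS"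
    proof (cases y)
      case (real r)
      have "{x \<in> space MS. y < fst x} = (\<Union>n. cev_rect h (max r c) (\<lambda>_. real n))"
      proof (intro equalityI subsetI)
        fix x assume x: "x \<in> {x \<in> space MS. y < fst x}"
        then have xO: "x \<in> ?\<Omega>" and yx: "ereal r < fst x" using spMS real by auto
        obtain n where n: "\<forall>i\<in>{1..h}. snd x i \<le> ereal (real n)"
          using Om_bound xO unfolding Om_def by blast
        have "ereal (max r c) < fst x" using yx xO unfolding Om_def by (auto simp: max_def)
        then show "x \<in> (\<Union>n. cev_rect h (max r c) (\<lambda>_. real n))"
          using xO n unfolding cev_rect_def Om_def by blast
      next
        fix x assume "x \<in> (\<Union>n. cev_rect h (max r c) (\<lambda>_. real n))"
        then obtain n where x: "x \<in> cev_rect h (max r c) (\<lambda>_. real n)" by blast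
        then have "x \<in> ?\<Omega>" using rect_sub_Om[of c "max r c"] by auto
        moreover have "y < fst x" using x real unfolding cev_rect_def
          by (auto intro: le_less_trans[of _ "ereal (max r c)"])
        ultimately show "x \<in> {x \<in> space MS. y < fst x}" using spMS by auto
      qed
      also have "\<dots> \<in> sets MS" using Gin by auto
      finally show ?thesis .
    next
      case PInf then show ?thesis by simp
    next
      case MInf
      have "{x \<in> space MS. y < fst x} = space MS"
        using MInf spMS unfolding Om_def by (auto intro: le_less_trans[of _ "ereal c"])
      then show ?thesis by simp
    qed
  qed
  have sndm: "(\<lambda>p. snd p i) \<in> borel_measurable MS" if i: "i \<in> {1..h}" for i
  proof (rule borel_measurableI_le)
    have real_case: "{x \<in> space MS. snd x i \<le> ereal r} \<in> sets MS" for r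
    proof -
      have "{x \<in> space MS. snd x i \<le> ereal r} = (\<Union>n. cev_rect h c (\<lambda>j. if j = i then r else real n))"
      proof (intro equalityI subsetI)
        fix x assume x: "x \<in> {x \<in> space MS. snd x i \<le> ereal r}"
        then have xO: "x \<in> ?\<Omega>" and le: "snd x i \<le> ereal r" using spMS by auto
        obtain n where n: "\<forall>i\<in>{1..h}. snd x i \<le> ereal (real n)"
          using Om_bound xO unfolding Om_def by blast
        have "x \<in> cev_rect h c (\<lambda>j. if j = i then r else real n)"
          using xO n le unfolding cev_rect_def Om_def by auto
        then show "x \<in> (\<Union>n. cev_rect h c (\<lambda>j. if j = i then r else real n))" by blast
      next
        fix x assume "x \<in> (\<Union>n. cev_rect h c (\<lambda>j. if j = i then r else real n))"
        then obtain n where x: "x \<in> cev_rect h c (\<lambda>j. if j = i then r else real n)" by blast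
        then have "x \<in> ?\<Omega>" using rect_sub_Om[of c c] by auto
        moreover have "snd x i \<le> ereal r" using x i unfolding cev_rect_def by force
        ultimately show "x \<in> {x \<in> space MS. snd x i \<le> ereal r}" using spMS by auto
      qed
      also have "\<dots> \<in> sets MS" using Gin by auto
      finally show ?thesis .
    qed
    fix y :: ereal
    show "{x \<in> space MS. snd x i \<le> y} \<in> sets MS"
    proof (cases y)
      case (real r) then show ?thesis using real_case by simp
    next
      case PInf then show ?thesis by simp
    next
      case MInf
      have "{x \<in> space MS. snd x i \<le> y} = (\<Inter>m::nat. {x \<in> space MS. snd x i \<le> ereal (- real m)})"
      proof (intro equalityI subsetI)
        fix x assume "x \<in> (\<Inter>m::nat. {x \<in> space MS. snd x i \<le> ereal (- real m)})"
        then have xs: "x \<in> space MS" and le: "\<And>m::nat. snd x i \<le> ereal (- real m)" by auto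
        have "snd x i = -\<infinity>"
        proof (cases "snd x i")
          case (real s)
          obtain m :: nat where "- s < real m" using reals_Archimedean2 by blast
          then show ?thesis using le[of m] real by auto
        qed (use le[of 0] in auto)
        then show "x \<in> {x \<in> space MS. snd x i \<le> y}" using xs MInf by auto
      qed (use MInf in auto)
      also have "\<dots> \<in> sets MS" using real_case by auto
      finally show ?thesis .
    qed
  qed
  have "snd \<in> measurable MS (PiM {1..h} (\<lambda>_. (borel :: ereal measure)))"
  proof -
    have "(\<lambda>\<omega> i. snd \<omega> i) \<in> measurable MS (PiM {1..h} (\<lambda>_. (borel :: ereal measure)))"
      by (rule measurable_PiM_single') (use sndm spMS in \<open>auto simp: Om_def space_cev\<close>)
    then show ?thesis by simp
  qed
  then have "(\<lambda>p. (fst p, snd p)) \<in> measurable MS (cev_space h)"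
    unfolding cev_space_def using fstm by (intro measurable_Pair) auto
  then have idm: "(\<lambda>p. p) \<in> measurable MS ?R"
    by (intro measurable_restrict_space2) (auto simp: spMS)
  show ?thesis
  proof
    show "sets ?R \<subseteq> sigma_sets ?\<Omega> ?G"
    proof
      fix A assume A: "A \<in> sets ?R"
      then have "A \<subseteq> ?\<Omega>" using sets.sets_into_space spR by blast
      then have "A = (\<lambda>p. p) -` A \<inter> space MS" using spMS by auto
      also have "\<dots> \<in> sets MS" using measurable_sets[OF idm A] .
      finally show "A \<in> sigma_sets ?\<Omega> ?G" using sMS by simp
    qed
  next
    have "?G \<subseteq> sets ?R"
    proof
      fix X assume "X \<in> ?G"
      then obtain a b where X: "X = cev_rect h a b" "c \<le> a" by blast
      then have "X \<subseteq> ?\<Omega>" using rect_sub_Om by blast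
      then show "X \<in> sets ?R" using X rect_sets Om_sets by (simp add: sets_restrict_space_iff)
    qed
    then have "sigma_sets ?\<Omega> ?G \<subseteq> sigma_sets ?\<Omega> (sets ?R)"
      by (rule sigma_sets_mono')
    also have "sigma_sets ?\<Omega> (sets ?R) = sets ?R"
      using sets.sigma_sets_eq[of ?R] spR by simp
    finally show "sigma_sets ?\<Omega> ?G \<subseteq> sets ?R" .
  qed
qed



definition Tm :: "nat \<Rightarrow> (nat \<Rightarrow> real) \<Rightarrow> real \<Rightarrow> ereal \<times> (nat \<Rightarrow> ereal) \<Rightarrow> ereal \<times> (nat \<Rightarrow> ereal)" where
  "Tm h \<kappa> t p = (ereal t * fst p, \<lambda>i\<in>{1..h}. ereal (t powr \<kappa> i) * snd p i)"

lemma Tm_meas: "Tm h \<kappa> t \<in> measurable (cev_space h) (cev_space h)"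
  unfolding Tm_def cev_space_def by measurable

lemma fst_ge_sets: "{p \<in> space (cev_space h). ereal c \<le> fst p} \<in> sets (cev_space h)"
  unfolding cev_space_def by measurable

lemma ereal_mult_less_iff: "(t::real) > 0 \<Longrightarrow> (ereal a < ereal t * x) = (ereal (a/t) < x)"
  by (cases x) (auto simp: pos_divide_less_eq mult.commute)

lemma ereal_mult_le_iff: "(t::real) > 0 \<Longrightarrow> (ereal t * x \<le> ereal b) = (x \<le> ereal (b/t))"
  by (cases x) (auto simp: pos_le_divide_eq mult.commute)

lemma ereal_mult_lessinf: "(t::real) > 0 \<Longrightarrow> (ereal t * x < \<infinity>) = (x < \<infinity>)"
  by (cases x) auto

lemma Tm_Om:
  assumes t: "t > 0" shows "Tm h \<kappa> t \<in> Om h (c/t) \<rightarrow> Om h c"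
proof
  fix p assume p: "p \<in> Om h (c/t)"
  have tk: "t powr \<kappa> i > 0" for i using t by simp
  have "ereal c < ereal t * fst p" using p ereal_mult_less_iff[OF t, of c "fst p"] unfolding Om_def by simp
  moreover have "\<forall>i\<in>{1..h}. ereal (t powr \<kappa> i) * snd p i < \<infinity>"
    using p ereal_mult_lessinf[OF tk] unfolding Om_def by simp
  ultimately show "Tm h \<kappa> t p \<in> Om h c" unfolding Om_def Tm_def space_cev by simp
qed

lemma Tm_rect:
  assumes t: "t > 0" and a: "c \<le> a"
  shows "Tm h \<kappa> t -` cev_rect h a b \<inter> Om h (c/t) = cev_rect h (a/t) (\<lambda>i. b i / t powr \<kappa> i)"
proof -
  have tk: "t powr \<kappa> i > 0" for i using t by simp
  have ct: "c / t \<le> a / t" using a t by (simp add: divide_right_mono)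
  have key: "Tm h \<kappa> t p \<in> cev_rect h a b \<longleftrightarrow> p \<in> cev_rect h (a/t) (\<lambda>i. b i / t powr \<kappa> i)"
    if p: "p \<in> space (cev_space h)" for p
  proof -
    have sp: "Tm h \<kappa> t p \<in> space (cev_space h)" unfolding Tm_def space_cev by simp
    have "(ereal a < fst (Tm h \<kappa> t p)) = (ereal (a/t) < fst p)"
      unfolding Tm_def using ereal_mult_less_iff[OF t] by simp
    moreover have "(\<forall>i\<in>{1..h}. snd (Tm h \<kappa> t p) i \<le> ereal (b i)) =
        (\<forall>i\<in>{1..h}. snd p i \<le> ereal (b i / t powr \<kappa> i))"
      unfolding Tm_def using ereal_mult_le_iff[OF tk] by simp
    ultimately show ?thesis unfolding cev_rect_def using p sp by blast
  qed
  show ?thesis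
  proof (intro equalityI subsetI)
    fix p assume p: "p \<in> Tm h \<kappa> t -` cev_rect h a b \<inter> Om h (c/t)"
    then have "p \<in> space (cev_space h)" unfolding Om_def by blast
    then show "p \<in> cev_rect h (a/t) (\<lambda>i. b i / t powr \<kappa> i)" using key p by blast
  next
    fix p assume p: "p \<in> cev_rect h (a/t) (\<lambda>i. b i / t powr \<kappa> i)"
    then have "p \<in> Om h (c/t)" using rect_sub_Om[OF ct] by blast
    moreover have "p \<in> space (cev_space h)" using p unfolding cev_rect_def by blast
    ultimately show "p \<in> Tm h \<kappa> t -` cev_rect h a b \<inter> Om h (c/t)" using key p by blast
  qed
qed

lemma rect_Int: "cev_rect h a b \<inter> cev_rect h a' b' = cev_rect h (max a a') (\<lambda>i. min (b i) (b' i))"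
proof -
  have m1: "ereal (max a a') = max (ereal a) (ereal a')" by (simp add: max_def)
  have m2: "ereal (min x y) = min (ereal x) (ereal y)" for x y by (simp add: min_def)
  show ?thesis unfolding cev_rect_def m1 m2 by auto
qed

lemma Om_Un: "(\<Union>n::nat. cev_rect h c (\<lambda>_. real n)) = Om h c"
proof (intro equalityI subsetI)
  fix x assume "x \<in> (\<Union>n::nat. cev_rect h c (\<lambda>_. real n))"
  then show "x \<in> Om h c" using rect_sub_Om[of c c] by blast
next
  fix x assume x: "x \<in> Om h c"
  then obtain n where "\<forall>i\<in>{1..h}. snd x i \<le> ereal (real n)"
    using Om_bound unfolding Om_def by blast
  then show "x \<in> (\<Union>n::nat. cev_rect h c (\<lambda>_. real n))"
    using x unfolding Om_def cev_rect_def by blast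
qed

lemma homog_sets:
  fixes \<nu> :: "(ereal \<times> (nat \<Rightarrow> ereal)) measure"
  assumes nu_sets: "sets \<nu> = sets (cev_space h)"
    and nu_radon: "\<And>\<epsilon>. \<epsilon> > 0 \<Longrightarrow> emeasure \<nu> {p \<in> space \<nu>. ereal \<epsilon> \<le> fst p} < \<infinity>"
    and nu_homog: "\<And>t y0 y. t > 0 \<Longrightarrow> y0 > 0 \<Longrightarrow>
        emeasure \<nu> (cev_rect h (t * y0) (\<lambda>i. t powr \<kappa> i * y i))
          = ennreal (t powr (-\<alpha>)) * emeasure \<nu> (cev_rect h y0 y)"
    and t: "t > 0" and c: "c > 0"
    and A: "A \<in> sets (cev_space h)" "A \<subseteq> Om h c"
  shows "emeasure \<nu> A = ennreal (t powr (-\<alpha>)) * emeasure \<nu> (Tm h \<kappa> t -` A \<inter> Om h (c/t))"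
proof -
  have spnu: "space \<nu> = space (cev_space h)" using nu_sets by (rule sets_eq_imp_space_eq)
  have Om_nu: "Om h d \<in> sets \<nu>" for d using Om_sets nu_sets by simp
  have Om_sub: "Om h d \<subseteq> space \<nu>" for d unfolding Om_def spnu by auto
  let ?G = "{cev_rect h a b | a b. c \<le> a}"
  define M where "M = restrict_space \<nu> (Om h c)"
  define N where "N = density (distr (restrict_space \<nu> (Om h (c/t))) (restrict_space (cev_space h) (Om h c)) (Tm h \<kappa> t)) (\<lambda>_. ennreal (t powr (-\<alpha>)))"
  have Tmm: "Tm h \<kappa> t \<in> measurable (restrict_space \<nu> (Om h (c/t))) (restrict_space (cev_space h) (Om h c))"
  proof (rule measurable_restrict_space2)
    show "Tm h \<kappa> t \<in> space (restrict_space \<nu> (Om h (c/t))) \<rightarrow> Om h c"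
      using Tm_Om[OF t] Om_sub by (auto simp: space_restrict_space)
    show "Tm h \<kappa> t \<in> measurable (restrict_space \<nu> (Om h (c/t))) (cev_space h)"
      by (rule measurable_restrict_space1) (use Tm_meas measurable_cong_sets[OF nu_sets refl] in blast)
  qed
  have sM: "sets M = sigma_sets (Om h c) ?G"
    unfolding M_def sets_restrict_space nu_sets gen_sets[symmetric] by simp
  have sN: "sets N = sigma_sets (Om h c) ?G"
    unfolding N_def using gen_sets by simp
  have eMN: "emeasure N X = ennreal (t powr (-\<alpha>)) * emeasure \<nu> (Tm h \<kappa> t -` X \<inter> Om h (c/t))"
    if X: "X \<in> sets (cev_space h)" "X \<subseteq> Om h c" for X
  proof -
    have XR: "X \<in> sets (restrict_space (cev_space h) (Om h c))"
      using X Om_sets by (simp add: sets_restrict_space_iff)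
    have sp: "space (restrict_space \<nu> (Om h (c/t))) = Om h (c/t)"
      using Om_sub by (auto simp: space_restrict_space)
    show ?thesis
      unfolding N_def
      apply (subst emeasure_density_const)
       apply (simp add: XR)
      apply (subst emeasure_distr[OF Tmm XR])
      apply (subst emeasure_restrict_space)
      using Om_nu Om_sub sp by auto
  qed
  have eM: "emeasure M X = emeasure \<nu> X" if "X \<subseteq> Om h c" for X
    unfolding M_def using that Om_nu Om_sub by (subst emeasure_restrict_space) auto
  have "M = N"
  proof (rule measure_eqI_generator_eq[OF _ _ _ sM sN, where A="\<lambda>n. cev_rect h c (\<lambda>_. real n)"])
    show "Int_stable ?G"
    proof (unfold Int_stable_def, intro ballI)
      fix X Y assume "X \<in> ?G" "Y \<in> ?G"
      then obtain a b a' b' where "X = cev_rect h a b" "c \<le> a" "Y = cev_rect h a' b'" "c \<le> a'"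
        by blast
      then show "X \<inter> Y \<in> ?G"
        by (intro CollectI exI[of _ "max a a'"] exI[of _ "\<lambda>i. min (b i) (b' i)"]) (auto simp: rect_Int)
    qed
    show "?G \<subseteq> Pow (Om h c)" using rect_sub_Om by blast
    show "range (\<lambda>n. cev_rect h c (\<lambda>_. real n)) \<subseteq> ?G" by blast
    show "(\<Union>i. cev_rect h c (\<lambda>_. real i)) = Om h c" by (rule Om_Un)
  next
    fix i :: nat
    have "emeasure M (cev_rect h c (\<lambda>_. real i)) = emeasure \<nu> (cev_rect h c (\<lambda>_. real i))"
      by (rule eM) (rule rect_sub_Om, simp)
    also have "\<dots> \<le> emeasure \<nu> {p \<in> space \<nu>. ereal c \<le> fst p}"
    proof (rule emeasure_mono)
      have "{p \<in> space (cev_space h). ereal c \<le> fst p} \<in> sets (cev_space h)"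
        by (rule fst_ge_sets)
      then show "{p \<in> space \<nu>. ereal c \<le> fst p} \<in> sets \<nu>" using nu_sets spnu by simp
    qed (auto simp: cev_rect_def spnu)
    also have "\<dots> < \<infinity>" using nu_radon c by blast
    finally show "emeasure M (cev_rect h c (\<lambda>_. real i)) \<noteq> \<infinity>" by simp
  next
    fix X assume "X \<in> ?G"
    then obtain a b where X: "X = cev_rect h a b" "c \<le> a" by blast
    have a0: "a / t > 0" using X c t by simp
    have eqb: "(\<lambda>i. t powr \<kappa> i * (b i / t powr \<kappa> i)) = b" using t by auto
    have "emeasure M X = emeasure \<nu> X" using X rect_sub_Om by (intro eM) auto
    also have "\<dots> = ennreal (t powr (-\<alpha>)) * emeasure \<nu> (cev_rect h (a/t) (\<lambda>i. b i / t powr \<kappa> i))"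
      using nu_homog[OF t a0, of "\<lambda>i. b i / t powr \<kappa> i"] t X eqb by simp
    also have "\<dots> = emeasure N X"
      using eMN[of X] X rect_sets rect_sub_Om Tm_rect[OF t X(2)] by auto
    finally show "emeasure M X = emeasure N X" .
  qed
  then have "emeasure M A = emeasure N A" by simp
  then show ?thesis using eM[OF A(2)] eMN[OF A] by simp
qed



definition jf :: "nat \<Rightarrow> (nat \<Rightarrow> real) \<Rightarrow> real \<times> (nat \<Rightarrow> real) \<Rightarrow> (nat \<Rightarrow> real)" where
  "jf h \<kappa> q = (\<lambda>i\<in>{1..h}. fst q powr (-\<kappa> i) * snd q i)"

definition fin :: "nat \<Rightarrow> ereal \<times> (nat \<Rightarrow> ereal) \<Rightarrow> bool" where
  "fin h p \<longleftrightarrow> fst p < \<infinity> \<and> (\<forall>i\<in>{1..h}. \<bar>snd p i\<bar> < \<infinity>)"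

definition Wp :: "nat \<Rightarrow> (nat \<Rightarrow> real) \<Rightarrow> real \<Rightarrow> (nat \<Rightarrow> real) set \<Rightarrow> (ereal \<times> (nat \<Rightarrow> ereal)) set" where
  "Wp h \<kappa> s B = {p \<in> space (cev_space h). ereal s < fst p \<and> fin h p \<and> jf h \<kappa> (cev_real h p) \<in> B}"

lemma jf_meas: "jf h \<kappa> \<in> measurable (real_vec_space h) (PiM {1..h} (\<lambda>_. (borel :: real measure)))"
  unfolding jf_def real_vec_space_def by measurable

lemma fin_sets: "{p \<in> space (cev_space h). ereal s < fst p \<and> fin h p} \<in> sets (cev_space h)"
  unfolding fin_def cev_space_def by measurable

lemma Wp_sets:
  assumes B: "B \<in> sets (PiM {1..h} (\<lambda>_. (borel :: real measure)))"
  shows "Wp h \<kappa> s B \<in> sets (cev_space h)"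
proof -
  have m: "(\<lambda>p. jf h \<kappa> (cev_real h p)) \<in> measurable (cev_space h) (PiM {1..h} (\<lambda>_. (borel :: real measure)))"
    using jf_meas cev_real_meas by (rule measurable_comp[rotated, unfolded comp_def])
  have "Wp h \<kappa> s B = {p \<in> space (cev_space h). ereal s < fst p \<and> fin h p} \<inter>
      ((\<lambda>p. jf h \<kappa> (cev_real h p)) -` B \<inter> space (cev_space h))"
    unfolding Wp_def by auto
  also have "\<dots> \<in> sets (cev_space h)"
    using fin_sets measurable_sets[OF m B] by (rule sets.Int)
  finally show ?thesis .
qed

lemma ereal_abs_mult_fin: "(t::real) > 0 \<Longrightarrow> (\<bar>ereal t * x\<bar> < \<infinity>) = (\<bar>x\<bar> < \<infinity>)"
  by (cases x) auto

lemma fin_Tm: "t > 0 \<Longrightarrow> fin h (Tm h \<kappa> t p) = fin h p"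
  unfolding fin_def Tm_def using ereal_mult_lessinf[of t "fst p"] ereal_abs_mult_fin
  by simp

lemma Wp_sub_Om: "Wp h \<kappa> s B \<subseteq> Om h s"
  unfolding Wp_def Om_def fin_def by auto

lemma Tm_Wp:
  assumes s: "s > 0"
  shows "Tm h \<kappa> s -` Wp h \<kappa> s B \<inter> Om h (s/s) = Wp h \<kappa> 1 B"
proof -
  have sk: "s powr \<kappa> i > 0" for i using s by simp
  have key: "Tm h \<kappa> s p \<in> Wp h \<kappa> s B \<longleftrightarrow> p \<in> Wp h \<kappa> 1 B"
    if p: "p \<in> space (cev_space h)" "ereal 1 < fst p" for p
  proof (cases "fin h p")
    case False
    then show ?thesis using fin_Tm[OF s] unfolding Wp_def by simp
  next
    case True
    obtain x where x: "fst p = ereal x" using True p(2) unfolding fin_def by (cases "fst p") auto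
    have x1: "x > 1" using p(2) x by simp
    have sp: "Tm h \<kappa> s p \<in> space (cev_space h)" unfolding Tm_def space_cev by simp
    have f1: "(ereal s < fst (Tm h \<kappa> s p)) = (ereal 1 < fst p)"
      unfolding Tm_def using ereal_mult_less_iff[OF s, of s] s by simp
    have "jf h \<kappa> (cev_real h (Tm h \<kappa> s p)) = jf h \<kappa> (cev_real h p)"
    proof
      fix i
      show "jf h \<kappa> (cev_real h (Tm h \<kappa> s p)) i = jf h \<kappa> (cev_real h p) i"
      proof (cases "i \<in> {1..h}")
        case True
        have "(s * x) powr (-\<kappa> i) * (s powr \<kappa> i * real_of_ereal (snd p i))
            = x powr (-\<kappa> i) * real_of_ereal (snd p i)"
          using s x1 by (simp add: powr_mult powr_minus field_simps)
        then show ?thesis using True unfolding jf_def cev_real_def Tm_def x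
          by (simp add: real_of_ereal_mult)
      next
        case False then show ?thesis unfolding jf_def by (simp only: restrict_def if_not_P[OF False] if_False)
      qed
    qed
    then show ?thesis using f1 fin_Tm[OF s] sp p unfolding Wp_def by simp
  qed
  show ?thesis
  proof (intro equalityI subsetI)
    fix p assume p: "p \<in> Tm h \<kappa> s -` Wp h \<kappa> s B \<inter> Om h (s/s)"
    then have "p \<in> space (cev_space h)" "ereal 1 < fst p" using s unfolding Om_def by auto
    then show "p \<in> Wp h \<kappa> 1 B" using key p by blast
  next
    fix p assume p: "p \<in> Wp h \<kappa> 1 B"
    then have "p \<in> space (cev_space h)" "ereal 1 < fst p" unfolding Wp_def by auto
    moreover have "p \<in> Om h (s/s)" using Wp_sub_Om[of h \<kappa> 1 B] p s by auto
    ultimately show "p \<in> Tm h \<kappa> s -` Wp h \<kappa> s B \<inter> Om h (s/s)" using key p by blast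
  qed
qed



lemma space_rv: "space (real_vec_space h) = UNIV \<times> (Pi\<^sub>E {1..h} (\<lambda>_. UNIV))"
  by (simp add: real_vec_space_def space_pair_measure space_PiM)

lemma cev_real_space: "cev_real h p \<in> space (real_vec_space h)"
  unfolding space_rv cev_real_def by simp

lemma jf_space: "jf h \<kappa> q \<in> space (PiM {1..h} (\<lambda>_. (borel :: real measure)))"
  unfolding jf_def space_PiM by simp

lemma ereal_fin_cases: "x \<noteq> -\<infinity> \<Longrightarrow> x < \<infinity> \<Longrightarrow> x = ereal (real_of_ereal x)"
  by (cases x) auto

lemma unit_Wp:
  assumes s: "s \<ge> 1"
  shows "{p \<in> cev_unit_part h. cev_real h p \<in> {q \<in> space (real_vec_space h). s < fst q \<and> jf h \<kappa> q \<in> B}}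
     = Wp h \<kappa> s B"
proof (intro equalityI subsetI)
  fix p assume p: "p \<in> {p \<in> cev_unit_part h. cev_real h p \<in> {q \<in> space (real_vec_space h). s < fst q \<and> jf h \<kappa> q \<in> B}}"
  then have u: "p \<in> space (cev_space h)" "1 \<le> fst p" "fst p < \<infinity>" "\<forall>i\<in>{1..h}. \<bar>snd p i\<bar> < \<infinity>"
    and q: "s < real_of_ereal (fst p)" "jf h \<kappa> (cev_real h p) \<in> B"
    unfolding cev_unit_part_def cev_real_def by auto
  have fe: "ereal (real_of_ereal (fst p)) = fst p" using u by (intro ereal_fin_cases[symmetric]) auto
  have "ereal s < ereal (real_of_ereal (fst p))" using q(1) by simp
  then have "ereal s < fst p" by (simp only: fe)
  then show "p \<in> Wp h \<kappa> s B" using u q unfolding Wp_def fin_def by auto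
next
  fix p assume p: "p \<in> Wp h \<kappa> s B"
  then have u: "p \<in> space (cev_space h)" "ereal s < fst p" "fst p < \<infinity>" "\<forall>i\<in>{1..h}. \<bar>snd p i\<bar> < \<infinity>"
    and q: "jf h \<kappa> (cev_real h p) \<in> B"
    unfolding Wp_def fin_def by auto
  have ne: "fst p \<noteq> -\<infinity>" using u(2) by auto
  have fe: "ereal (real_of_ereal (fst p)) = fst p" using u ne by (intro ereal_fin_cases[symmetric]) auto
  have "ereal s < ereal (real_of_ereal (fst p))" using u(2) by (simp only: fe)
  then have sr: "s < real_of_ereal (fst p)" by simp
  have "ereal 1 \<le> ereal s" using s by simp
  then have "ereal 1 \<le> fst p" using u(2) by (meson less_imp_le order_trans)
  then have "1 \<le> fst p" by (simp add: one_ereal_def)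
  then show "p \<in> {p \<in> cev_unit_part h. cev_real h p \<in> {q \<in> space (real_vec_space h). s < fst q \<and> jf h \<kappa> q \<in> B}}"
    using u q sr cev_real_space[of h p] unfolding cev_unit_part_def by (auto simp: cev_real_def)
qed

lemma unit_lt1:
  "{p \<in> cev_unit_part h. cev_real h p \<in> {q \<in> space (real_vec_space h). fst q < 1}} = {}"
proof -
  have "1 \<le> real_of_ereal x" if "1 \<le> x" "x < \<infinity>" for x :: ereal
    using that by (cases x) auto
  then show ?thesis unfolding cev_unit_part_def cev_real_def by force
qed

lemma unit_eq1:
  assumes s: "0 < s" "s < 1"
  shows "{p \<in> cev_unit_part h. cev_real h p \<in> {q \<in> space (real_vec_space h). fst q = 1}}
    \<subseteq> Wp h \<kappa> s (space (PiM {1..h} (\<lambda>_. (borel :: real measure))))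
       - Wp h \<kappa> 1 (space (PiM {1..h} (\<lambda>_. (borel :: real measure))))"
proof
  fix p assume p: "p \<in> {p \<in> cev_unit_part h. cev_real h p \<in> {q \<in> space (real_vec_space h). fst q = 1}}"
  then have u: "p \<in> space (cev_space h)" "1 \<le> fst p" "fst p < \<infinity>" "\<forall>i\<in>{1..h}. \<bar>snd p i\<bar> < \<infinity>"
    and q: "real_of_ereal (fst p) = 1"
    unfolding cev_unit_part_def cev_real_def by auto
  have "fst p = ereal (real_of_ereal (fst p))" using u by (intro ereal_fin_cases) auto
  then have f1: "fst p = 1" using q by (simp add: one_ereal_def)
  then show "p \<in> Wp h \<kappa> s (space (PiM {1..h} (\<lambda>_. (borel :: real measure))))
       - Wp h \<kappa> 1 (space (PiM {1..h} (\<lambda>_. (borel :: real measure))))"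
    using u s jf_space unfolding Wp_def fin_def by (auto simp: one_ereal_def)
qed

lemma Wp_mono: "s \<le> s' \<Longrightarrow> Wp h \<kappa> s' B \<subseteq> Wp h \<kappa> s B"
  unfolding Wp_def by (auto intro: le_less_trans[of "ereal s" "ereal s'"])



lemma zero_from_bound:
  fixes m w \<alpha> :: real
  assumes b: "\<And>s. 0 < s \<Longrightarrow> s < 1 \<Longrightarrow> m \<le> (s powr (-\<alpha>) - 1) * w"
  shows "m \<le> 0"
proof -
  have "((\<lambda>s. (s powr (-\<alpha>) - 1) * w) \<longlongrightarrow> (1 powr (-\<alpha>) - 1) * w) (at_left (1::real))"
    by (intro tendsto_intros) auto
  then have lim: "((\<lambda>s. (s powr (-\<alpha>) - 1) * w) \<longlongrightarrow> 0) (at_left (1::real))" by simp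
  have ev: "eventually (\<lambda>s. m \<le> (s powr (-\<alpha>) - 1) * w) (at_left (1::real))"
  proof -
    have "eventually (\<lambda>s. s \<in> {0<..<1}) (at_left (1::real))"
      by (rule eventually_at_left_real) simp
    then show ?thesis by (rule eventually_mono) (use b in auto)
  qed
  show ?thesis
    by (rule tendsto_lowerbound[OF lim ev]) simp
qed

lemma indep_ext:
  fixes P :: "'a measure" and Y0 :: "'a \<Rightarrow> real"
  assumes P: "prob_space P" and Y0: "Y0 \<in> borel_measurable P" and SB: "SB \<in> sets P"
    and eq: "\<And>x. measure P {\<omega> \<in> space P. x < Y0 \<omega> \<and> \<omega> \<in> SB} = measure P SB * measure P {\<omega> \<in> space P. x < Y0 \<omega>}"
    and A: "A \<in> sets borel"
  shows "measure P {\<omega> \<in> space P. Y0 \<omega> \<in> A \<and> \<omega> \<in> SB} = measure P {\<omega> \<in> space P. Y0 \<omega> \<in> A} * measure P SB"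
proof -
  interpret P: prob_space P by (rule P)
  define M1 where "M1 = distr (restrict_space P SB) borel Y0"
  define M2 where "M2 = density (distr P borel Y0) (\<lambda>_. ennreal (measure P SB))"
  have SBs: "SB \<subseteq> space P" using SB by (rule sets.sets_into_space)
  have spR: "space (restrict_space P SB) = SB" using SBs by (auto simp: space_restrict_space)
  have Y0R: "Y0 \<in> borel_measurable (restrict_space P SB)" using Y0 by (rule measurable_restrict_space1)
  have e1: "emeasure M1 X = emeasure P {\<omega> \<in> space P. Y0 \<omega> \<in> X \<and> \<omega> \<in> SB}" if X: "X \<in> sets borel" for X
  proof -
    have "emeasure M1 X = emeasure (restrict_space P SB) (Y0 -` X \<inter> SB)"
      unfolding M1_def using emeasure_distr[OF Y0R X] spR by simp
    also have "\<dots> = emeasure P (Y0 -` X \<inter> SB)"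
      using SB SBs by (intro emeasure_restrict_space) auto
    also have "Y0 -` X \<inter> SB = {\<omega> \<in> space P. Y0 \<omega> \<in> X \<and> \<omega> \<in> SB}" using SBs by auto
    finally show ?thesis .
  qed
  have e2: "emeasure M2 X = ennreal (measure P SB) * emeasure P {\<omega> \<in> space P. Y0 \<omega> \<in> X}" if X: "X \<in> sets borel" for X
  proof -
    have "emeasure M2 X = ennreal (measure P SB) * emeasure (distr P borel Y0) X"
      unfolding M2_def using X by (intro emeasure_density_const) simp
    also have "emeasure (distr P borel Y0) X = emeasure P (Y0 -` X \<inter> space P)"
      by (rule emeasure_distr[OF Y0 X])
    also have "Y0 -` X \<inter> space P = {\<omega> \<in> space P. Y0 \<omega> \<in> X}" by auto
    finally show ?thesis .
  qed
  have meas: "{\<omega> \<in> space P. Y0 \<omega> \<in> X \<and> \<omega> \<in> SB} \<in> sets P" "{\<omega> \<in> space P. Y0 \<omega> \<in> X} \<in> sets P"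
    if "X \<in> sets borel" for X
  proof -
    have "{\<omega> \<in> space P. Y0 \<omega> \<in> X} = Y0 -` X \<inter> space P" by auto
    then show s2: "{\<omega> \<in> space P. Y0 \<omega> \<in> X} \<in> sets P" using measurable_sets[OF Y0 that] by simp
    have "{\<omega> \<in> space P. Y0 \<omega> \<in> X \<and> \<omega> \<in> SB} = {\<omega> \<in> space P. Y0 \<omega> \<in> X} \<inter> SB" by auto
    then show "{\<omega> \<in> space P. Y0 \<omega> \<in> X \<and> \<omega> \<in> SB} \<in> sets P" using s2 SB by simp
  qed
  have "M1 = M2"
  proof (rule measure_eqI_lessThan)
    show "sets M1 = sets borel" "sets M2 = sets borel" unfolding M1_def M2_def by simp_all
    fix x :: real
    show "emeasure M1 {x<..} < \<infinity>" using e1[of "{x<..}"] P.emeasure_finite by (simp add: less_top[symmetric])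
    have "emeasure M1 {x<..} = ennreal (measure P {\<omega> \<in> space P. x < Y0 \<omega> \<and> \<omega> \<in> SB})"
      using e1[of "{x<..}"] P.emeasure_eq_measure by simp
    also have "\<dots> = ennreal (measure P SB) * ennreal (measure P {\<omega> \<in> space P. x < Y0 \<omega>})"
      using eq by (simp add: ennreal_mult)
    also have "\<dots> = emeasure M2 {x<..}"
      using e2[of "{x<..}"] P.emeasure_eq_measure by simp
    finally show "emeasure M1 {x<..} = emeasure M2 {x<..}" .
  qed
  then have "emeasure M1 A = emeasure M2 A" by simp
  then have "ennreal (measure P {\<omega> \<in> space P. Y0 \<omega> \<in> A \<and> \<omega> \<in> SB})
      = ennreal (measure P SB * measure P {\<omega> \<in> space P. Y0 \<omega> \<in> A})"
    using e1[OF A] e2[OF A] P.emeasure_eq_measure by (simp add: ennreal_mult)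
  then show ?thesis by (simp add: mult.commute)
qed



lemma sets_help:
  assumes f: "f \<in> borel_measurable M" and g: "g \<in> measurable M N" and B: "B \<in> sets N"
  shows "{\<omega> \<in> space M. (s::real) < f \<omega> \<and> g \<omega> \<in> B} \<in> sets M"
proof -
  have "{\<omega> \<in> space M. s < f \<omega> \<and> g \<omega> \<in> B} = (f -` {s<..} \<inter> space M) \<inter> (g -` B \<inter> space M)" by auto
  also have "\<dots> \<in> sets M" using measurable_sets[OF f, of "{s<..}"] measurable_sets[OF g B] by auto
  finally show ?thesis .
qed

lemma sets_help2:
  assumes g: "g \<in> measurable M N" and B: "B \<in> sets N"
  shows "{\<omega> \<in> space M. g \<omega> \<in> B} \<in> sets M"
proof -
  have "{\<omega> \<in> space M. g \<omega> \<in> B} = g -` B \<inter> space M" by auto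
  then show ?thesis using measurable_sets[OF g B] by simp
qed

lemma Aset_sets:
  assumes B: "B \<in> sets (PiM {1..h} (\<lambda>_. (borel :: real measure)))"
  shows "{q \<in> space (real_vec_space h). s < fst q \<and> jf h \<kappa> q \<in> B} \<in> sets (real_vec_space h)"
  by (rule sets_help[OF _ jf_meas B]) (simp add: real_vec_space_def)

lemma lt1_sets: "{q \<in> space (real_vec_space h). fst q < 1} \<in> sets (real_vec_space h)"
  unfolding real_vec_space_def by measurable

lemma eq1_sets: "{q \<in> space (real_vec_space h). fst q = 1} \<in> sets (real_vec_space h)"
  unfolding real_vec_space_def by measurable

theorem mainTheorem4:
  fixes h :: nat and \<alpha> :: real and \<kappa> :: "nat \<Rightarrow> real"
    and \<nu> :: "(ereal \<times> (nat \<Rightarrow> ereal)) measure"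
    and P :: "'a measure" and Y0 :: "'a \<Rightarrow> real" and Y :: "nat \<Rightarrow> 'a \<Rightarrow> real"
  assumes h_pos: "h \<ge> 1"
    and alpha_pos: "\<alpha> > 0"
    and nu_sets: "sets \<nu> = sets (cev_space h)"
    and nu_support: "emeasure \<nu> {p \<in> space \<nu>. fst p \<le> 0} = 0"
    and nu_radon: "\<And>\<epsilon>. \<epsilon> > 0 \<Longrightarrow> emeasure \<nu> {p \<in> space \<nu>. ereal \<epsilon> \<le> fst p} < \<infinity>"
    and nu_nonzero: "emeasure \<nu> (space \<nu>) \<noteq> 0"
    and nu_homog: "\<And>t y0 y. t > 0 \<Longrightarrow> y0 > 0 \<Longrightarrow>
        emeasure \<nu> (cev_rect h (t * y0) (\<lambda>i. t powr \<kappa> i * y i))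
          = ennreal (t powr (-\<alpha>)) * emeasure \<nu> (cev_rect h y0 y)"
    and nu_prob: "emeasure \<nu> (cev_unit_part h) = 1"
    and P_prob: "prob_space P"
    and Y0_rv: "Y0 \<in> borel_measurable P"
    and Y_rv: "\<And>i. i \<in> {1..h} \<Longrightarrow> Y i \<in> borel_measurable P"
    and Y_distr: "\<And>A. A \<in> sets (real_vec_space h) \<Longrightarrow>
        emeasure P {\<omega> \<in> space P. (Y0 \<omega>, \<lambda>i\<in>{1..h}. Y i \<omega>) \<in> A}
          = emeasure \<nu> {p \<in> cev_unit_part h. cev_real h p \<in> A}"
  shows "(\<forall>y\<ge>1. measure P {\<omega> \<in> space P. Y0 \<omega> > y} = y powr (-\<alpha>))
       \<and> (\<forall>A \<in> sets (borel :: real measure). \<forall>B \<in> sets (PiM {1..h} (\<lambda>_. (borel :: real measure))).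
            measure P {\<omega> \<in> space P. Y0 \<omega> \<in> A \<and>
                         (\<lambda>i\<in>{1..h}. Y0 \<omega> powr (-\<kappa> i) * Y i \<omega>) \<in> B}
          = measure P {\<omega> \<in> space P. Y0 \<omega> \<in> A}
            * measure P {\<omega> \<in> space P. (\<lambda>i\<in>{1..h}. Y0 \<omega> powr (-\<kappa> i) * Y i \<omega>) \<in> B})
       \<and> (AE \<omega> in P. Y0 \<omega> \<ge> 1 \<and>
           (\<forall>i\<in>{1..h}. Y i \<omega> = Y0 \<omega> powr \<kappa> i * (Y0 \<omega> powr (-\<kappa> i) * Y i \<omega>)))"
proof -
  interpret P: prob_space P by (rule P_prob)
  let ?PB = "PiM {1..h} (\<lambda>_. (borel :: real measure))"
  let ?U = "space ?PB"
  define Z where "Z = (\<lambda>\<omega>. (Y0 \<omega>, \<lambda>i\<in>{1..h}. Y i \<omega>))"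
  have Zm: "Z \<in> measurable P (real_vec_space h)"
  proof -
    have "(\<lambda>\<omega>. \<lambda>i\<in>{1..h}. Y i \<omega>) \<in> measurable P ?PB"
      by (rule measurable_restrict) (rule Y_rv)
    then show ?thesis unfolding Z_def real_vec_space_def using Y0_rv by (intro measurable_Pair) auto
  qed
  define J where "J = (\<lambda>\<omega>. \<lambda>i\<in>{1..h}. Y0 \<omega> powr (-\<kappa> i) * Y i \<omega>)"
  have JZ: "J \<omega> = jf h \<kappa> (Z \<omega>)" for \<omega> unfolding J_def jf_def Z_def by (auto simp: fun_eq_iff)
  have Jm: "J \<in> measurable P ?PB"
  proof -
    have "(\<lambda>\<omega>. jf h \<kappa> (Z \<omega>)) \<in> measurable P ?PB"
      using measurable_comp[OF Zm jf_meas] by (simp add: comp_def)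
    then show ?thesis using JZ by (simp add: fun_eq_iff[symmetric, of J] JZ[abs_def])
  qed
  have Jsp: "J \<omega> \<in> ?U" for \<omega> unfolding J_def space_PiM by simp
  have distr_eq: "emeasure P {\<omega> \<in> space P. Z \<omega> \<in> A} = emeasure \<nu> {p \<in> cev_unit_part h. cev_real h p \<in> A}"
    if "A \<in> sets (real_vec_space h)" for A
    using Y_distr[OF that] unfolding Z_def .
  have spnu: "space \<nu> = space (cev_space h)" using nu_sets by (rule sets_eq_imp_space_eq)
  have Wfin: "emeasure \<nu> (Wp h \<kappa> s B) < \<infinity>" if s: "s > 0" for s B
  proof -
    have "emeasure \<nu> (Wp h \<kappa> s B) \<le> emeasure \<nu> {p \<in> space \<nu>. ereal s \<le> fst p}"
    proof (rule emeasure_mono)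
      show "{p \<in> space \<nu>. ereal s \<le> fst p} \<in> sets \<nu>" using fst_ge_sets nu_sets spnu by simp
    qed (auto simp: Wp_def spnu)
    also have "\<dots> < \<infinity>" using nu_radon s by blast
    finally show ?thesis .
  qed
  have Wh: "emeasure \<nu> (Wp h \<kappa> s B) = ennreal (s powr (-\<alpha>)) * emeasure \<nu> (Wp h \<kappa> 1 B)"
    if s: "s > 0" and B: "B \<in> sets ?PB" for s B
    using homog_sets[OF nu_sets nu_radon nu_homog s s Wp_sets[OF B] Wp_sub_Om] Tm_Wp[OF s] by simp
  have Whr: "measure \<nu> (Wp h \<kappa> s B) = s powr (-\<alpha>) * measure \<nu> (Wp h \<kappa> 1 B)"
    if s: "s > 0" and B: "B \<in> sets ?PB" for s B
    using Wh[OF s B] by (simp add: measure_def enn2real_mult)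
  have PW: "measure P {\<omega> \<in> space P. s < Y0 \<omega> \<and> J \<omega> \<in> B} = measure \<nu> (Wp h \<kappa> s B)"
    if s: "s \<ge> 1" and B: "B \<in> sets ?PB" for s B
  proof -
    let ?A = "{q \<in> space (real_vec_space h). s < fst q \<and> jf h \<kappa> q \<in> B}"
    have seteq: "{\<omega> \<in> space P. Z \<omega> \<in> ?A} = {\<omega> \<in> space P. s < Y0 \<omega> \<and> J \<omega> \<in> B}"
      using measurable_space[OF Zm] JZ by (auto simp: Z_def)
    have e1: "emeasure P {\<omega> \<in> space P. Z \<omega> \<in> ?A} = emeasure \<nu> {p \<in> cev_unit_part h. cev_real h p \<in> ?A}"
      by (rule distr_eq) (rule Aset_sets[OF B])
    have e2: "{p \<in> cev_unit_part h. cev_real h p \<in> ?A} = Wp h \<kappa> s B" by (rule unit_Wp[OF s])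
    have "emeasure P {\<omega> \<in> space P. s < Y0 \<omega> \<and> J \<omega> \<in> B} = emeasure \<nu> (Wp h \<kappa> s B)"
      using e1 unfolding seteq e2 .
    then show ?thesis by (simp add: measure_def)
  qed
  have lt1: "emeasure P {\<omega> \<in> space P. Y0 \<omega> < 1} = 0"
  proof -
    have seteq: "{\<omega> \<in> space P. Z \<omega> \<in> {q \<in> space (real_vec_space h). fst q < 1}} = {\<omega> \<in> space P. Y0 \<omega> < 1}"
      using measurable_space[OF Zm] by (auto simp: Z_def)
    have e1: "emeasure P {\<omega> \<in> space P. Z \<omega> \<in> {q \<in> space (real_vec_space h). fst q < 1}}
       = emeasure \<nu> {p \<in> cev_unit_part h. cev_real h p \<in> {q \<in> space (real_vec_space h). fst q < 1}}"
      by (rule distr_eq) (rule lt1_sets)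
    show ?thesis using e1 unfolding seteq unit_lt1 by simp
  qed
  have eq1: "measure P {\<omega> \<in> space P. Y0 \<omega> = 1} = 0"
  proof -
    let ?m = "measure P {\<omega> \<in> space P. Y0 \<omega> = 1}"
    have UB: "?U \<in> sets ?PB" by simp
    have "?m \<le> (s powr (-\<alpha>) - 1) * measure \<nu> (Wp h \<kappa> 1 ?U)" if s: "0 < s" "s < 1" for s
    proof -
      have seteq: "{\<omega> \<in> space P. Z \<omega> \<in> {q \<in> space (real_vec_space h). fst q = 1}} = {\<omega> \<in> space P. Y0 \<omega> = 1}"
        using measurable_space[OF Zm] by (auto simp: Z_def)
      have e1: "emeasure P {\<omega> \<in> space P. Z \<omega> \<in> {q \<in> space (real_vec_space h). fst q = 1}}
          = emeasure \<nu> {p \<in> cev_unit_part h. cev_real h p \<in> {q \<in> space (real_vec_space h). fst q = 1}}"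
        by (rule distr_eq) (rule eq1_sets)
      then have "emeasure P {\<omega> \<in> space P. Y0 \<omega> = 1}
          = emeasure \<nu> {p \<in> cev_unit_part h. cev_real h p \<in> {q \<in> space (real_vec_space h). fst q = 1}}"
        unfolding seteq .
      also have "\<dots> \<le> emeasure \<nu> (Wp h \<kappa> s ?U - Wp h \<kappa> 1 ?U)"
        using unit_eq1[OF s, of h \<kappa>] Wp_sets[OF UB] nu_sets by (intro emeasure_mono) auto
      finally have le: "emeasure P {\<omega> \<in> space P. Y0 \<omega> = 1} \<le> emeasure \<nu> (Wp h \<kappa> s ?U - Wp h \<kappa> 1 ?U)" .
      have fin: "emeasure \<nu> (Wp h \<kappa> s ?U - Wp h \<kappa> 1 ?U) < \<infinity>"
      proof -
        have "emeasure \<nu> (Wp h \<kappa> s ?U - Wp h \<kappa> 1 ?U) \<le> emeasure \<nu> (Wp h \<kappa> s ?U)"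
          using Wp_sets[OF UB] nu_sets by (intro emeasure_mono) auto
        then show ?thesis using Wfin[OF s(1), of ?U] by (rule le_less_trans)
      qed
      have "?m \<le> measure \<nu> (Wp h \<kappa> s ?U - Wp h \<kappa> 1 ?U)"
        unfolding measure_def using le fin by (intro enn2real_mono) auto
      also have "\<dots> = measure \<nu> (Wp h \<kappa> s ?U) - measure \<nu> (Wp h \<kappa> 1 ?U)"
        using Wfin[of 1 ?U] Wfin[OF s(1), of ?U] Wp_sets[OF UB] nu_sets Wp_mono[of s 1 h \<kappa> ?U] s
        by (intro measure_Diff) auto
      also have "\<dots> = (s powr (-\<alpha>) - 1) * measure \<nu> (Wp h \<kappa> 1 ?U)"
        using Whr[OF s(1) UB] by (simp add: algebra_simps)
      finally show ?thesis .
    qed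
    then have "?m \<le> 0" by (rule zero_from_bound)
    then show ?thesis using measure_nonneg[of P] by (meson order.antisym)
  qed
  have AE1: "AE \<omega> in P. 1 < Y0 \<omega>"
  proof -
    have a1: "AE \<omega> in P. \<not> Y0 \<omega> < 1"
      using lt1 by (subst AE_iff_measurable[OF _ refl]) (auto intro: sets_help2[OF Y0_rv, of "{..<1}", simplified])
    have "emeasure P {\<omega> \<in> space P. Y0 \<omega> = 1} = 0"
      using eq1 P.emeasure_eq_measure by simp
    then have a2: "AE \<omega> in P. Y0 \<omega> \<noteq> 1"
      by (subst AE_iff_measurable[OF _ refl]) (auto intro: sets_help2[OF Y0_rv, of "{1}", simplified])
    show ?thesis using a1 a2 by eventually_elim auto
  qed
  have JB_sets: "{\<omega> \<in> space P. J \<omega> \<in> B} \<in> sets P" if "B \<in> sets ?PB" for B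
    by (rule sets_help2[OF Jm that])
  have main: "measure P {\<omega> \<in> space P. s < Y0 \<omega> \<and> J \<omega> \<in> B} = s powr (-\<alpha>) * measure P {\<omega> \<in> space P. J \<omega> \<in> B}"
    if s: "s \<ge> 1" and B: "B \<in> sets ?PB" for s B
  proof -
    have "measure P {\<omega> \<in> space P. 1 < Y0 \<omega> \<and> J \<omega> \<in> B} = measure P {\<omega> \<in> space P. J \<omega> \<in> B}"
      using AE1 by (intro measure_eq_AE sets_help[OF Y0_rv Jm B] JB_sets[OF B]) auto
    then show ?thesis using PW[OF s B] PW[of 1 B] B Whr[of s B] s by simp
  qed
  have tail: "measure P {\<omega> \<in> space P. s < Y0 \<omega>} = s powr (-\<alpha>)" if s: "s \<ge> 1" for s
  proof -
    have "{\<omega> \<in> space P. s < Y0 \<omega> \<and> J \<omega> \<in> ?U} = {\<omega> \<in> space P. s < Y0 \<omega>}" using Jsp by auto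
    moreover have "{\<omega> \<in> space P. J \<omega> \<in> ?U} = space P" using Jsp by auto
    ultimately show ?thesis using main[OF s, of ?U] by (simp add: P.prob_space)
  qed
  have indep: "measure P {\<omega> \<in> space P. Y0 \<omega> \<in> A \<and> J \<omega> \<in> B}
      = measure P {\<omega> \<in> space P. Y0 \<omega> \<in> A} * measure P {\<omega> \<in> space P. J \<omega> \<in> B}"
    if A: "A \<in> sets (borel :: real measure)" and B: "B \<in> sets ?PB" for A B
  proof -
    let ?SB = "{\<omega> \<in> space P. J \<omega> \<in> B}"
    have eq: "measure P {\<omega> \<in> space P. x < Y0 \<omega> \<and> \<omega> \<in> ?SB} = measure P ?SB * measure P {\<omega> \<in> space P. x < Y0 \<omega>}" for x
    proof (cases "x \<ge> 1")
      case True
      have "{\<omega> \<in> space P. x < Y0 \<omega> \<and> \<omega> \<in> ?SB} = {\<omega> \<in> space P. x < Y0 \<omega> \<and> J \<omega> \<in> B}" by auto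
      then show ?thesis using main[OF True B] tail[OF True] by simp
    next
      case False
      have "measure P {\<omega> \<in> space P. x < Y0 \<omega> \<and> \<omega> \<in> ?SB} = measure P ?SB"
      proof -
        have "{\<omega> \<in> space P. x < Y0 \<omega> \<and> \<omega> \<in> ?SB} = {\<omega> \<in> space P. x < Y0 \<omega> \<and> J \<omega> \<in> B}" by auto
        then have "{\<omega> \<in> space P. x < Y0 \<omega> \<and> \<omega> \<in> ?SB} \<in> sets P" using sets_help[OF Y0_rv Jm B, of x] by simp
        then show ?thesis using AE1 False JB_sets[OF B] by (intro measure_eq_AE) auto
      qed
      moreover have "measure P {\<omega> \<in> space P. x < Y0 \<omega>} = measure P (space P)"
        using AE1 False sets_help2[OF Y0_rv, of "{x<..}"]
        by (intro measure_eq_AE) auto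
      ultimately show ?thesis by (simp add: P.prob_space)
    qed
    have "measure P {\<omega> \<in> space P. Y0 \<omega> \<in> A \<and> \<omega> \<in> ?SB} = measure P {\<omega> \<in> space P. Y0 \<omega> \<in> A} * measure P ?SB"
      by (rule indep_ext[OF P_prob Y0_rv JB_sets[OF B] eq A])
    moreover have "{\<omega> \<in> space P. Y0 \<omega> \<in> A \<and> \<omega> \<in> ?SB} = {\<omega> \<in> space P. Y0 \<omega> \<in> A \<and> J \<omega> \<in> B}" by auto
    ultimately show ?thesis by simp
  qed
  have AEfin: "AE \<omega> in P. Y0 \<omega> \<ge> 1 \<and>
           (\<forall>i\<in>{1..h}. Y i \<omega> = Y0 \<omega> powr \<kappa> i * (Y0 \<omega> powr (-\<kappa> i) * Y i \<omega>))"
    using AE1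
  proof eventually_elim
    case (elim \<omega>)
    then have pos: "Y0 \<omega> > 0" by simp
    have "Y0 \<omega> powr \<kappa> i * (Y0 \<omega> powr (-\<kappa> i) * Y i \<omega>) = Y i \<omega>" for i
      using pos by (simp add: powr_minus field_simps)
    then show ?case using elim by simp
  qed
  show ?thesis
    using tail indep AEfin unfolding J_def by auto
qed

end
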